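(* Let $G$ be a finite simple graph and $e$ a pair of distinct vertices of $G$. For each $i\ge0$, $$a_i(G+e)=a_i(G)+\sum_{J\in\mathcal{E}\mathcal{C}(G+e)\setminus\mathcal{E}\mathcal{C}(G)}|b(G|_J)|\cdot a_{i-\frac{|J|}{2}}\big((G+e)^\ast_J\big).$$
   Context: All graphs are finite simple graphs; $G|_I$ is the induced subgraph on $I\subseteq V(G)$. The signed $a$-number: $sa(\emptyset)=1$ for the null graph; if $G$ has connected components $G_1,\dots,G_\ell$, $sa(G)=\prod_k sa(G_k)$; if $G$ is connected and nonempty, $sa(G)=-\sum_{I\subsetneq V(G)}sa(G|_I)$ when $|V(G)|$ is even and $sa(G)=0$ when $|V(G)|$ is odd. The $a$-number is $a(G)=|sa(G)|$; for an integer $i$, $a_i(G)=\sum_{I\subseteq V(G),\,|I|=2i}a(G|_I)$ (so $a_i(G)=0$ if $i<0$ or $2i>|V(G)|$). The $b$-number is $b(G)=\sum_{I\subseteq V(G)}sa(G|_I)$. $\mathcal{E}\mathcal{C}(G)=\{I\subseteq V(G): G|_I\text{ has no connected component of odd order}\}$. $G+e$ is $G$ with $e$ added as an edge ($G+e=G$ if $e\in E(G)$). The reconnected complement $H^\ast_J$ of $J\subseteq V(H)$ is the graph on $V(H)\setminus J$ in which $\{a,b\}$ is an edge iff there is a path from $a$ to $b$ in $H|_{J\cup\{a,b\}}$. *)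

theory Defs
  imports Main
begin

type_synonym 'a graph = "'a set \<times> 'a set set"

definition verts :: "'a graph \<Rightarrow> 'a set" where "verts G = fst G"
definition edges :: "'a graph \<Rightarrow> 'a set set" where "edges G = snd G"

definition simple_graph :: "'a graph \<Rightarrow> bool" where
  "simple_graph G \<longleftrightarrow> finite (verts G) \<and>
     (\<forall>e\<in>edges G. \<exists>x y. e = {x, y} \<and> x \<noteq> y \<and> x \<in> verts G \<and> y \<in> verts G)"

definition induce :: "'a graph \<Rightarrow> 'a set \<Rightarrow> 'a graph" where
  "induce G I = (I, {e \<in> edges G. e \<subseteq> I})"

definition adj_rel :: "'a graph \<Rightarrow> ('a \<times> 'a) set" where
  "adj_rel G = {(x, y). x \<in> verts G \<and> y \<in> verts G \<and> {x, y} \<in> edges G}"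

definition reachable :: "'a graph \<Rightarrow> 'a \<Rightarrow> 'a \<Rightarrow> bool" where
  "reachable G x y \<longleftrightarrow> x \<in> verts G \<and> y \<in> verts G \<and> (x, y) \<in> (adj_rel G)\<^sup>*"

definition component_of :: "'a graph \<Rightarrow> 'a \<Rightarrow> 'a set" where
  "component_of G x = {y. reachable G x y}"

definition components :: "'a graph \<Rightarrow> 'a set set" where
  "components G = component_of G ` verts G"

definition connected_graph :: "'a graph \<Rightarrow> bool" where
  "connected_graph G \<longleftrightarrow> verts G \<noteq> {} \<and> (\<forall>x\<in>verts G. \<forall>y\<in>verts G. reachable G x y)"

text \<open>The recursion
  decreases the number of vertices; we implement it with a fuel argument, and
  sa G uses fuel card (verts G), which suffices (components of a disconnected
  graph and proper induced subgraphs have strictly fewer vertices).\<close>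
fun sa_aux :: "nat \<Rightarrow> 'a graph \<Rightarrow> int" where
  "sa_aux 0 G = 1"
| "sa_aux (Suc n) G =
     (if verts G = {} then 1
      else if \<not> connected_graph G then (\<Prod>C\<in>components G. sa_aux n (induce G C))
      else if odd (card (verts G)) then 0
      else - (\<Sum>I\<in>{I. I \<subset> verts G}. sa_aux n (induce G I)))"

definition sa :: "'a graph \<Rightarrow> int" where
  "sa G = sa_aux (card (verts G)) G"

definition a_num :: "'a graph \<Rightarrow> int" where
  "a_num G = \<bar>sa G\<bar>"

text \<open>a_i(G) for an integer index i (zero if i < 0 or 2i > |V|).\<close>
definition a_idx :: "'a graph \<Rightarrow> int \<Rightarrow> int" where
  "a_idx G i = (\<Sum>I\<in>{I. I \<subseteq> verts G \<and> int (card I) = 2 * i}. a_num (induce G I))"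

definition b_num :: "'a graph \<Rightarrow> int" where
  "b_num G = (\<Sum>I\<in>{I. I \<subseteq> verts G}. sa (induce G I))"

definition EC :: "'a graph \<Rightarrow> 'a set set" where
  "EC G = {I. I \<subseteq> verts G \<and> (\<forall>C\<in>components (induce G I). even (card C))}"

definition add_edge :: "'a graph \<Rightarrow> 'a set \<Rightarrow> 'a graph" where
  "add_edge G e = (verts G, insert e (edges G))"

definition reconn :: "'a graph \<Rightarrow> 'a set \<Rightarrow> 'a graph" where
  "reconn H J = (verts H - J,
     {{x, y} | x y. x \<in> verts H - J \<and> y \<in> verts H - J \<and> x \<noteq> y \<and>
                    reachable (induce H (J \<union> {x, y})) x y})"

end

theory Submission
  imports Defs
begin


lemma verts_induce[simp]: "verts (induce G I) = I" by (simp add: induce_def verts_def)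
lemma edges_induce[simp]: "edges (induce G I) = {e\<in>edges G. e \<subseteq> I}" by (simp add: induce_def edges_def)
lemma induce_induce[simp]: "K \<subseteq> I \<Longrightarrow> induce (induce G I) K = induce G K"
  by (auto simp: induce_def edges_def)
lemma adj_induce: "adj_rel (induce G I) = {(x,y). x\<in>I \<and> y\<in>I \<and> {x,y} \<in> edges G}"
  by (auto simp: adj_rel_def)

lemma sym_adj: "sym (adj_rel H)"
  by (auto simp: adj_rel_def sym_def insert_commute)

lemma reach_sym: "reachable H x y \<Longrightarrow> reachable H y x"
proof -
  assume a: "reachable H x y"
  have "sym ((adj_rel H)\<^sup>*)" using sym_adj sym_rtrancl by blast
  then show ?thesis using a unfolding reachable_def by (auto dest: symD)
qed

lemma reach_trans: "reachable H x y \<Longrightarrow> reachable H y z \<Longrightarrow> reachable H x z"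
  unfolding reachable_def by auto

lemma reach_refl: "x \<in> verts H \<Longrightarrow> reachable H x x"
  unfolding reachable_def by auto

lemma comp_subset: "component_of H x \<subseteq> verts H"
  by (auto simp: component_of_def reachable_def)

lemma comp_self: "x \<in> verts H \<Longrightarrow> x \<in> component_of H x"
  by (auto simp: component_of_def reach_refl)

lemma comp_eq: "y \<in> component_of H x \<Longrightarrow> component_of H y = component_of H x"
proof -
  assume y: "y \<in> component_of H x"
  then have r: "reachable H x y" by (simp add: component_of_def)
  show ?thesis
  proof
    show "component_of H y \<subseteq> component_of H x"
    proof
      fix z assume "z \<in> component_of H y"
      then have "reachable H y z" by (simp add: component_of_def)
      then have "reachable H x z" using r by (rule reach_trans[rotated])
      then show "z \<in> component_of H x" by (simp add: component_of_def)
    qed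
    show "component_of H x \<subseteq> component_of H y"
    proof
      fix z assume "z \<in> component_of H x"
      then have "reachable H x z" by (simp add: component_of_def)
      then have "reachable H y z" using reach_sym[OF r] by (rule reach_trans[rotated])
      then show "z \<in> component_of H y" by (simp add: component_of_def)
    qed
  qed
qed

lemma comp_disj: "component_of H x \<inter> component_of H y \<noteq> {} \<Longrightarrow> component_of H x = component_of H y"
proof -
  assume "component_of H x \<inter> component_of H y \<noteq> {}"
  then obtain z where z: "z \<in> component_of H x" "z \<in> component_of H y" by blast
  have "component_of H z = component_of H x" by (rule comp_eq[OF z(1)])
  moreover have "component_of H z = component_of H y" by (rule comp_eq[OF z(2)])
  ultimately show ?thesis by simp
qed

lemma comps_disj: "C1 \<in> components H \<Longrightarrow> C2 \<in> components H \<Longrightarrow> C1 \<noteq> C2 \<Longrightarrow> C1 \<inter> C2 = {}"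
proof -
  assume a: "C1 \<in> components H" "C2 \<in> components H" "C1 \<noteq> C2"
  then obtain x y where "C1 = component_of H x" "C2 = component_of H y" unfolding components_def by blast
  then show ?thesis using a(3) comp_disj by metis
qed

lemma comp_full_connected:
  assumes "x \<in> verts H" "component_of H x = verts H"
  shows "connected_graph H"
  unfolding connected_graph_def
proof (intro conjI ballI)
  show "verts H \<noteq> {}" using assms by blast
  fix y z assume "y \<in> verts H" "z \<in> verts H"
  then have "reachable H x y" "reachable H x z" using assms(2) by (auto simp: component_of_def)
  then show "reachable H y z" using reach_sym reach_trans by metis
qed

lemma connected_comp:
  assumes "connected_graph H" "x \<in> verts H"
  shows "component_of H x = verts H"
proof
  show "component_of H x \<subseteq> verts H" by (rule comp_subset)
  show "verts H \<subseteq> component_of H x"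
    using assms unfolding connected_graph_def component_of_def by blast
qed

lemma connected_components: "connected_graph H \<Longrightarrow> components H = {verts H}"
proof -
  assume c: "connected_graph H"
  then have ne: "verts H \<noteq> {}" by (simp add: connected_graph_def)
  have "component_of H ` verts H = (\<lambda>_. verts H) ` verts H"
    using connected_comp[OF c] by (intro image_cong) auto
  also have "\<dots> = {verts H}" using ne by blast
  finally show ?thesis by (simp add: components_def)
qed

lemma disconnected_comp_psubset:
  assumes "\<not> connected_graph H" "C \<in> components H"
  shows "C \<subset> verts H"
proof -
  obtain x where x: "x \<in> verts H" "C = component_of H x" using assms(2) unfolding components_def by blast
  then have "C \<subseteq> verts H" using comp_subset by simp
  moreover have "C \<noteq> verts H" using comp_full_connected[OF x(1)] x(2) assms(1) by blast
  ultimately show ?thesis by blast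
qed

lemma sa_aux_fuel:
  "finite (verts G) \<Longrightarrow> card (verts G) \<le> n \<Longrightarrow> card (verts G) \<le> m \<Longrightarrow> sa_aux n G = sa_aux m G"
proof (induction n arbitrary: G m)
  case 0
  then have "verts G = {}" by auto
  then show ?case by (cases m) auto
next
  case (Suc n)
  show ?case
  proof (cases m)
    case 0
    then have "verts G = {}" using Suc by auto
    then show ?thesis using 0 by auto
  next
    case (Suc k)
    have A: "sa_aux n (induce G C) = sa_aux k (induce G C)" if "C \<subset> verts G" for C
    proof -
      have "card C < card (verts G)" using that Suc.prems psubset_card_mono by blast
      then show ?thesis using Suc.IH[of "induce G C" k] Suc.prems that \<open>m = Suc k\<close>
        by (auto intro: finite_subset)
    qed
    have B: "(\<Prod>C\<in>components G. sa_aux n (induce G C)) = (\<Prod>C\<in>components G. sa_aux k (induce G C))"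
      if "\<not> connected_graph G"
      using A disconnected_comp_psubset[OF that] by (intro prod.cong) auto
    have C: "(\<Sum>I\<in>{I. I \<subset> verts G}. sa_aux n (induce G I)) = (\<Sum>I\<in>{I. I \<subset> verts G}. sa_aux k (induce G I))"
      using A by (intro sum.cong) auto
    show ?thesis using B C Suc by simp
  qed
qed

definition SA :: "'a graph \<Rightarrow> 'a set \<Rightarrow> int" where "SA X I = sa (induce X I)"

lemma sa_induce_fuel: "finite C \<Longrightarrow> card C \<le> n \<Longrightarrow> sa_aux n (induce X C) = SA X C"
  unfolding SA_def sa_def using sa_aux_fuel[of "induce X C" n "card C"] by simp

lemma SA_empty[simp]: "SA X {} = 1"
  by (simp add: SA_def sa_def)

lemma SA_unfold:
  assumes "finite I"
  shows "SA X I = (if I = {} then 1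
     else if \<not> connected_graph (induce X I) then (\<Prod>C\<in>components (induce X I). SA X C)
     else if odd (card I) then 0 else - (\<Sum>K\<in>{K. K \<subset> I}. SA X K))"
proof (cases "I = {}")
  case True then show ?thesis by simp
next
  case False
  then obtain n where n: "card I = Suc n" using assms by (cases "card I") auto
  have A: "sa_aux n (induce (induce X I) C) = SA X C" if "C \<subset> I" for C
  proof -
    have "card C < card I" using that assms psubset_card_mono by blast
    then show ?thesis using sa_induce_fuel[of C n X] that n assms by (auto intro: finite_subset)
  qed
  have B: "(\<Prod>C\<in>components (induce X I). sa_aux n (induce (induce X I) C)) = (\<Prod>C\<in>components (induce X I). SA X C)"
    if "\<not> connected_graph (induce X I)"
  proof (rule prod.cong[OF refl])
    fix C assume "C \<in> components (induce X I)"
    then have "C \<subset> I" using disconnected_comp_psubset[OF that] by simp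
    then show "sa_aux n (induce (induce X I) C) = SA X C" using A[OF \<open>C \<subset> I\<close>] by auto
  qed
  have C: "(\<Sum>K\<in>{K. K \<subset> I}. sa_aux n (induce (induce X I) K)) = (\<Sum>K\<in>{K. K \<subset> I}. SA X K)"
  proof (rule sum.cong[OF refl])
    fix C assume "C \<in> {K. K \<subset> I}"
    then have "C \<subset> I" by simp
    then show "sa_aux n (induce (induce X I) C) = SA X C" using A[OF \<open>C \<subset> I\<close>] by auto
  qed
  have "SA X I = sa_aux (Suc n) (induce X I)" by (simp add: SA_def sa_def n)
  then show ?thesis using B C False by simp
qed



definition sep :: "'a graph \<Rightarrow> 'a set \<Rightarrow> 'a set \<Rightarrow> bool" where
  "sep X A B \<longleftrightarrow> (\<forall>x\<in>A. \<forall>y\<in>B. {x,y} \<notin> edges X)"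

lemma sep_sym: "sep X A B \<Longrightarrow> sep X B A"
  unfolding sep_def by (metis insert_commute)

lemma sep_mono: "sep X A B \<Longrightarrow> A' \<subseteq> A \<Longrightarrow> B' \<subseteq> B \<Longrightarrow> sep X A' B'"
  unfolding sep_def by blast

lemma adj_induce_mono: "A \<subseteq> B \<Longrightarrow> adj_rel (induce X A) \<subseteq> adj_rel (induce X B)"
  unfolding adj_induce by blast

lemma rtr_induce_mono: "A \<subseteq> B \<Longrightarrow> (x,y) \<in> (adj_rel (induce X A))\<^sup>* \<Longrightarrow> (x,y) \<in> (adj_rel (induce X B))\<^sup>*"
  using rtrancl_mono[OF adj_induce_mono] by blast

lemma reach_induce_mono: "A \<subseteq> B \<Longrightarrow> reachable (induce X A) x y \<Longrightarrow> reachable (induce X B) x y"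
  unfolding reachable_def using rtr_induce_mono by (metis subsetD verts_induce)

lemma sep_path:
  assumes "sep X A B" "x \<in> A" "(x,y) \<in> (adj_rel (induce X (A\<union>B)))\<^sup>*"
  shows "y \<in> A \<and> (x,y) \<in> (adj_rel (induce X A))\<^sup>*"
  using assms(3)
proof (induction rule: rtrancl_induct)
  case base then show ?case using assms(2) by simp
next
  case (step y z)
  then have yA: "y \<in> A" and z: "z \<in> A \<union> B" "{y,z} \<in> edges X" by (auto simp: adj_induce)
  have "z \<in> A"
  proof (rule ccontr)
    assume "z \<notin> A" then have "z \<in> B" using z by blast
    then show False using assms(1) yA z(2) unfolding sep_def by blast
  qed
  then have "(y,z) \<in> adj_rel (induce X A)" using yA z by (simp add: adj_induce)
  then show ?case using step \<open>z \<in> A\<close> by (meson rtrancl.rtrancl_into_rtrancl)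
qed

lemma reach_sep:
  assumes "sep X A B" "x \<in> A"
  shows "reachable (induce X (A\<union>B)) x y \<longleftrightarrow> reachable (induce X A) x y"
proof
  assume "reachable (induce X (A\<union>B)) x y"
  then have "(x,y) \<in> (adj_rel (induce X (A\<union>B)))\<^sup>*" unfolding reachable_def by simp
  then have "y \<in> A \<and> (x,y) \<in> (adj_rel (induce X A))\<^sup>*" by (rule sep_path[OF assms])
  then show "reachable (induce X A) x y" using assms(2) unfolding reachable_def by simp
next
  assume "reachable (induce X A) x y"
  then show "reachable (induce X (A\<union>B)) x y" by (rule reach_induce_mono[rotated]) blast
qed

lemma comp_sep:
  assumes "sep X A B" "x \<in> A"
  shows "component_of (induce X (A\<union>B)) x = component_of (induce X A) x"
  unfolding component_of_def by (intro Collect_cong reach_sep[OF assms])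

lemma comp_sep_image:
  assumes "sep X A B"
  shows "component_of (induce X (A\<union>B)) ` A = components (induce X A)"
proof -
  have "component_of (induce X (A\<union>B)) ` A = component_of (induce X A) ` A"
    by (rule image_cong[OF refl]) (rule comp_sep[OF assms])
  then show ?thesis by (simp add: components_def)
qed

lemma comps_sep_union:
  assumes "sep X A B"
  shows "components (induce X (A\<union>B)) = components (induce X A) \<union> components (induce X B)"
proof -
  have "components (induce X (A\<union>B)) = component_of (induce X (A\<union>B)) ` A \<union> component_of (induce X (A\<union>B)) ` B"
    by (simp add: components_def image_Un)
  also have "component_of (induce X (A\<union>B)) ` A = components (induce X A)"
    by (rule comp_sep_image[OF assms])
  also have "component_of (induce X (A\<union>B)) ` B = components (induce X B)"
  proof -
    have "component_of (induce X (A\<union>B)) ` B = component_of (induce X (B\<union>A)) ` B" by (simp add: Un_commute)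
    also have "\<dots> = components (induce X B)"
      by (rule comp_sep_image[OF sep_sym[OF assms]])
    finally show ?thesis .
  qed
  finally show ?thesis .
qed

lemma comps_nonempty: "C \<in> components (induce X I) \<Longrightarrow> C \<noteq> {}"
  unfolding components_def using comp_self by fastforce

lemma comps_subset: "C \<in> components (induce X I) \<Longrightarrow> C \<subseteq> I"
  unfolding components_def using comp_subset by fastforce

lemma finite_comps: "finite I \<Longrightarrow> finite (components (induce X I))"
  by (simp add: components_def)

lemma SA_prod:
  assumes "finite I"
  shows "SA X I = (\<Prod>C\<in>components (induce X I). SA X C)"
proof -
  consider "I = {}" | "I \<noteq> {}" "\<not> connected_graph (induce X I)" | "connected_graph (induce X I)"
    by blast
  then show ?thesis
  proof cases
    case 1 then show ?thesis by (simp add: components_def)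
  next
    case 2 then show ?thesis using SA_unfold[OF assms, of X] by simp
  next
    case 3 then show ?thesis using connected_components[OF 3] by simp
  qed
qed

lemma SA_mult:
  assumes "finite A" "finite B" "sep X A B" "A \<inter> B = {}"
  shows "SA X (A \<union> B) = SA X A * SA X B"
proof -
  have d: "components (induce X A) \<inter> components (induce X B) = {}"
  proof (rule ccontr)
    assume "components (induce X A) \<inter> components (induce X B) \<noteq> {}"
    then obtain C where "C \<in> components (induce X A)" "C \<in> components (induce X B)" by blast
    then have "C \<subseteq> A" "C \<subseteq> B" "C \<noteq> {}" using comps_subset comps_nonempty by blast+
    then show False using assms(4) by blast
  qed
  have "SA X (A \<union> B) = (\<Prod>C\<in>components (induce X A) \<union> components (induce X B). SA X C)"
    using SA_prod[of "A \<union> B" X] assms comps_sep_union[OF assms(3)] by simp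
  also have "\<dots> = SA X A * SA X B"
    using prod.union_disjoint[OF finite_comps[OF assms(1)] finite_comps[OF assms(2)] d]
      SA_prod[OF assms(1)] SA_prod[OF assms(2)] by simp
  finally show ?thesis .
qed

lemma comp_facts:
  assumes "C \<in> components (induce X I)"
  shows "C \<subseteq> I" "C \<noteq> {}" "sep X C (I - C)" "connected_graph (induce X C)"
proof -
  show CI: "C \<subseteq> I" using comps_subset[OF assms] .
  show "C \<noteq> {}" using comps_nonempty[OF assms] .
  obtain x where x: "x \<in> I" "C = component_of (induce X I) x" using assms unfolding components_def by auto
  show sp: "sep X C (I - C)"
    unfolding sep_def
  proof (intro ballI notI)
    fix y z assume y: "y \<in> C" and z: "z \<in> I - C" and e: "{y, z} \<in> edges X"
    have yI: "y \<in> I" using y CI by blast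
    have "reachable (induce X I) x y" using y x by (simp add: component_of_def)
    moreover have "reachable (induce X I) y z"
    proof -
      have "(y,z) \<in> adj_rel (induce X I)" using yI z e by (simp add: adj_induce)
      then show ?thesis using yI z unfolding reachable_def by auto
    qed
    ultimately have "reachable (induce X I) x z" by (rule reach_trans)
    then show False using z x by (simp add: component_of_def)
  qed
  have xC: "x \<in> C" using x comp_self[of x "induce X I"] by simp
  have IU: "C \<union> (I - C) = I" using CI by blast
  have "component_of (induce X C) x = C"
    using comp_sep[OF sp xC] IU x by simp
  then show "connected_graph (induce X C)" using comp_full_connected[of x "induce X C"] xC by simp
qed

lemma G1:
  assumes "finite I" "C \<in> components (induce X I)" "odd (card C)"
  shows "SA X I = 0"
proof -
  note cf = comp_facts[OF assms(2)]
  have fC: "finite C" using cf(1) assms(1) finite_subset by blast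
  have IU: "I = C \<union> (I - C)" using cf(1) by blast
  have "SA X (C \<union> (I - C)) = SA X C * SA X (I - C)"
    using assms(1) by (intro SA_mult[OF fC _ cf(3)]) auto
  then have "SA X I = SA X C * SA X (I - C)" using cf(1) by (simp add: Un_absorb1)
  moreover have "SA X C = 0" using SA_unfold[OF fC, of X] cf(2,4) assms(3) by simp
  ultimately show ?thesis by simp
qed

definition BB :: "'a graph \<Rightarrow> 'a set \<Rightarrow> int" where "BB X I = (\<Sum>K\<in>Pow I. SA X K)"

lemma BB_empty[simp]: "BB X {} = 1" by (simp add: BB_def)

lemma L2a:
  assumes "finite C" "C \<noteq> {}" "connected_graph (induce X C)" "even (card C)"
  shows "BB X C = 0"
proof -
  have P: "Pow C = insert C {K. K \<subset> C}" by auto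
  have "BB X C = SA X C + (\<Sum>K\<in>{K. K \<subset> C}. SA X K)"
  proof -
    have f: "finite {K. K \<subset> C}" by (rule finite_subset[of _ "Pow C"]) (auto simp: assms(1))
    show ?thesis unfolding BB_def P using f by (subst sum.insert) auto
  qed
  then show ?thesis using SA_unfold[OF assms(1), of X] assms by simp
qed

lemma BB_mult:
  assumes "finite A" "finite B" "sep X A B" "A \<inter> B = {}"
  shows "BB X (A \<union> B) = BB X A * BB X B"
proof -
  let ?f = "\<lambda>(K1, K2). K1 \<union> K2"
  have inj: "inj_on ?f (Pow A \<times> Pow B)"
  proof (rule inj_onI)
    fix p q assume p: "p \<in> Pow A \<times> Pow B" and q: "q \<in> Pow A \<times> Pow B" and e: "?f p = ?f q"
    obtain K1 K2 L1 L2 where pq: "p = (K1,K2)" "q = (L1,L2)" by force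
    then have k: "K1 \<subseteq> A" "K2 \<subseteq> B" "L1 \<subseteq> A" "L2 \<subseteq> B" "K1 \<union> K2 = L1 \<union> L2" using p q e by auto
    have "K1 = (K1 \<union> K2) \<inter> A" using k assms(4) by blast
    also have "\<dots> = (L1 \<union> L2) \<inter> A" using k(5) by simp
    also have "\<dots> = L1" using k assms(4) by blast
    finally have 1: "K1 = L1" .
    have "K2 = (K1 \<union> K2) \<inter> B" using k assms(4) by blast
    also have "\<dots> = (L1 \<union> L2) \<inter> B" using k(5) by simp
    also have "\<dots> = L2" using k assms(4) by blast
    finally have 2: "K2 = L2" .
    show "p = q" using pq 1 2 by simp
  qed
  have img: "?f ` (Pow A \<times> Pow B) = Pow (A \<union> B)"
  proof
    show "?f ` (Pow A \<times> Pow B) \<subseteq> Pow (A \<union> B)" by auto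
    show "Pow (A \<union> B) \<subseteq> ?f ` (Pow A \<times> Pow B)"
    proof
      fix K assume "K \<in> Pow (A \<union> B)"
      then have "K = ?f (K \<inter> A, K \<inter> B)" "(K \<inter> A, K \<inter> B) \<in> Pow A \<times> Pow B" by auto
      then show "K \<in> ?f ` (Pow A \<times> Pow B)" by blast
    qed
  qed
  have "BB X (A \<union> B) = (\<Sum>p\<in>Pow A \<times> Pow B. SA X (?f p))"
    unfolding BB_def using sum.reindex[OF inj, of "SA X"] img by simp
  also have "\<dots> = (\<Sum>p\<in>Pow A \<times> Pow B. SA X (fst p) * SA X (snd p))"
  proof (rule sum.cong[OF refl])
    fix p assume p: "p \<in> Pow A \<times> Pow B"
    obtain K1 K2 where pk: "p = (K1, K2)" by force
    have k: "K1 \<subseteq> A" "K2 \<subseteq> B" using p pk by auto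
    have "SA X (K1 \<union> K2) = SA X K1 * SA X K2"
      using SA_mult[of K1 K2 X] k assms finite_subset sep_mono[OF assms(3) k] by blast
    then show "SA X (?f p) = SA X (fst p) * SA X (snd p)" using pk by simp
  qed
  also have "\<dots> = BB X A * BB X B"
    unfolding BB_def sum_product sum.cartesian_product by (simp add: case_prod_beta)
  finally show ?thesis .
qed

definition ecp :: "'a graph \<Rightarrow> 'a set \<Rightarrow> bool" where
  "ecp X I \<longleftrightarrow> (\<forall>C\<in>components (induce X I). even (card C))"

lemma L2:
  assumes "finite I" "I \<noteq> {}" "ecp X I"
  shows "BB X I = 0"
proof -
  obtain x where x: "x \<in> I" using assms(2) by blast
  let ?C = "component_of (induce X I) x"
  have C: "?C \<in> components (induce X I)" using x by (simp add: components_def)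
  note cf = comp_facts[OF C]
  have fC: "finite ?C" using cf(1) assms(1) finite_subset by blast
  have IU: "I = ?C \<union> (I - ?C)" using cf(1) by blast
  have "BB X (?C \<union> (I - ?C)) = BB X ?C * BB X (I - ?C)"
    using assms(1) by (intro BB_mult[OF fC _ cf(3)]) auto
  then have "BB X I = BB X ?C * BB X (I - ?C)" using cf(1) by (simp add: Un_absorb1)
  moreover have "BB X ?C = 0"
    using L2a[OF fC cf(2) cf(4)] assms(3) C unfolding ecp_def by blast
  ultimately show ?thesis by simp
qed

lemma G1': "finite I \<Longrightarrow> \<not> ecp X I \<Longrightarrow> SA X I = 0"
proof -
  assume "finite I" "\<not> ecp X I"
  then obtain C where "C \<in> components (induce X I)" "odd (card C)" unfolding ecp_def by blast
  then show ?thesis using G1 \<open>finite I\<close> by blast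
qed

lemma even_card_ecp:
  assumes "finite I" "ecp X I"
  shows "even (card I)"
proof -
  have U: "\<Union>(components (induce X I)) = I"
  proof
    show "\<Union>(components (induce X I)) \<subseteq> I" using comps_subset by (metis Sup_least)
    show "I \<subseteq> \<Union>(components (induce X I))"
    proof
      fix x assume x: "x \<in> I"
      have "x \<in> component_of (induce X I) x" using comp_self[of x "induce X I"] x by simp
      moreover have "component_of (induce X I) x \<in> components (induce X I)"
        using x by (simp add: components_def)
      ultimately show "x \<in> \<Union>(components (induce X I))" by (rule UnionI[rotated])
    qed
  qed
  have pw: "pairwise disjnt (components (induce X I))"
    unfolding pairwise_def disjnt_def
  proof (intro ballI impI)
    fix C1 C2 assume "C1 \<in> components (induce X I)" "C2 \<in> components (induce X I)" "C1 \<noteq> C2"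
    then show "C1 \<inter> C2 = {}" by (rule comps_disj)
  qed
  have fin: "\<And>C. C \<in> components (induce X I) \<Longrightarrow> finite C"
  proof -
    fix C assume "C \<in> components (induce X I)"
    then have "C \<subseteq> I" by (rule comps_subset)
    then show "finite C" using assms(1) by (rule finite_subset)
  qed
  have "card I = (\<Sum>C\<in>components (induce X I). card C)"
    using card_Union_disjoint[OF pw fin] unfolding U .
  also have "even \<dots>"
  proof (rule dvd_sum)
    fix C assume "C \<in> components (induce X I)"
    then show "2 dvd card C" using assms(2) unfolding ecp_def by blast
  qed
  finally show ?thesis .
qed

lemma ecp_sep:
  assumes "sep X A B" "ecp X (A \<union> B)"
  shows "ecp X A"
  unfolding ecp_def
proof
  fix C assume "C \<in> components (induce X A)"
  then have "C \<in> components (induce X (A \<union> B))" using comps_sep_union[OF assms(1)] by simp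
  then show "even (card C)" using assms(2) unfolding ecp_def by blast
qed



lemma even_part:
  assumes "finite I" "ecp X I" "C \<subseteq> I" "sep X C (I - C)"
  shows "even (card C)" "ecp X C"
proof -
  have U: "C \<union> (I - C) = I" using assms(3) by blast
  show e: "ecp X C" using ecp_sep[OF assms(4)] assms(2) U by simp
  show "even (card C)" using even_card_ecp[OF _ e] assms(1,3) finite_subset by blast
qed

lemma sep_edges_mono: "sep H A B \<Longrightarrow> edges G \<subseteq> edges H \<Longrightarrow> sep G A B"
  unfolding sep_def by blast

lemma verts_add_edge[simp]: "verts (add_edge G e) = verts G"
  by (simp add: add_edge_def verts_def)
lemma edges_add_edge[simp]: "edges (add_edge G e) = insert e (edges G)"
  by (simp add: add_edge_def edges_def)

lemma ecp_mono_add: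
  assumes "finite I" "ecp G I"
  shows "ecp (add_edge G e) I"
  unfolding ecp_def
proof
  fix C assume C: "C \<in> components (induce (add_edge G e) I)"
  note cf = comp_facts[OF C]
  have "sep G C (I - C)" by (rule sep_edges_mono[OF cf(3)]) auto
  then show "even (card C)" using even_part(1)[OF assms cf(1)] by blast
qed

lemma verts_reconn[simp]: "verts (reconn H J) = verts H - J"
  by (simp add: reconn_def verts_def)
lemma edges_reconn: "edges (reconn H J) = {{x, y} | x y. x \<in> verts H - J \<and> y \<in> verts H - J \<and> x \<noteq> y \<and>
                    reachable (induce H (J \<union> {x, y})) x y}"
  by (simp add: reconn_def edges_def)

lemma redge_D:
  assumes "{a,b} \<in> edges (reconn H J)"
  shows "reachable (induce H (J \<union> {a,b})) a b"
proof -
  obtain x y where xy: "{a,b} = {x,y}" "reachable (induce H (J \<union> {x, y})) x y"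
    using assms unfolding edges_reconn by blast
  have "(a = x \<and> b = y) \<or> (a = y \<and> b = x)" using xy(1) by (metis doubleton_eq_iff)
  then show ?thesis
  proof
    assume "a = x \<and> b = y" then show ?thesis using xy by simp
  next
    assume "a = y \<and> b = x" then show ?thesis using xy reach_sym by (metis insert_commute)
  qed
qed

lemma redge_I:
  assumes "a \<in> verts H - J" "b \<in> verts H - J" "a \<noteq> b" "reachable (induce H (J \<union> {a,b})) a b"
  shows "{a,b} \<in> edges (reconn H J)"
  unfolding edges_reconn mem_Collect_eq
  by (rule exI[of _ a], rule exI[of _ b]) (use assms in simp)

lemma R1_to:
  assumes "J \<subseteq> I" "x \<in> I - J" "reachable (induce (reconn H J) (I - J)) x y"
  shows "reachable (induce H I) x y"
proof -
  have "(x,y) \<in> (adj_rel (induce (reconn H J) (I - J)))\<^sup>*" using assms(3) by (simp add: reachable_def)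
  then show ?thesis
  proof (induction rule: rtrancl_induct)
    case base then show ?case using assms(2) reach_refl[of x "induce H I"] by simp
  next
    case (step y z)
    then have yz: "y \<in> I - J" "z \<in> I - J" "{y,z} \<in> edges (reconn H J)" by (auto simp: adj_induce)
    have "reachable (induce H (J \<union> {y,z})) y z" by (rule redge_D[OF yz(3)])
    moreover have "J \<union> {y,z} \<subseteq> I" using yz assms(1) by blast
    ultimately have "reachable (induce H I) y z" by (rule reach_induce_mono[rotated])
    then show ?case by (rule reach_trans[OF step.IH])
  qed
qed

lemma R1_from:
  assumes "J \<subseteq> I" "I \<subseteq> verts H" "x \<in> I - J" "reachable (induce H I) x y" "y \<notin> J"
  shows "reachable (induce (reconn H J) (I - J)) x y"
proof -
  let ?R = "induce (reconn H J) (I - J)"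
  have "(x,y) \<in> (adj_rel (induce H I))\<^sup>*" using assms(4) by (simp add: reachable_def)
  then have "\<exists>w\<in>I - J. reachable ?R x w \<and> (y \<in> J \<or> y = w) \<and> (w,y) \<in> (adj_rel (induce H (J \<union> {w})))\<^sup>*"
  proof (induction rule: rtrancl_induct)
    case base
    then show ?case using assms(3) reach_refl[of x ?R] by auto
  next
    case (step z y)
    obtain w where w: "w \<in> I - J" "reachable ?R x w" "z \<in> J \<or> z = w"
      "(w,z) \<in> (adj_rel (induce H (J \<union> {w})))\<^sup>*" using step.IH by blast
    have zy: "z \<in> I" "y \<in> I" "{z,y} \<in> edges H" using step.hyps(2) by (auto simp: adj_induce)
    show ?case
    proof (cases "y \<in> J")
      case True
      have "(z,y) \<in> adj_rel (induce H (J \<union> {w}))" using w(3) True zy(3) by (auto simp: adj_induce)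
      then have "(w,y) \<in> (adj_rel (induce H (J \<union> {w})))\<^sup>*" using w(4) by (rule rtrancl_into_rtrancl[rotated])
      then show ?thesis using w(1,2) True by blast
    next
      case False
      show ?thesis
      proof (cases "y = w")
        case True then show ?thesis using w(1,2) by auto
      next
        case ne: False
        have "(w,z) \<in> (adj_rel (induce H (J \<union> {w,y})))\<^sup>*"
          by (rule rtr_induce_mono[OF _ w(4)]) blast
        moreover have "(z,y) \<in> adj_rel (induce H (J \<union> {w,y}))" using w(3) zy(3) by (auto simp: adj_induce)
        ultimately have "(w,y) \<in> (adj_rel (induce H (J \<union> {w,y})))\<^sup>*" by (rule rtrancl_into_rtrancl)
        then have "reachable (induce H (J \<union> {w,y})) w y" by (simp add: reachable_def)
        then have "{w,y} \<in> edges (reconn H J)" using redge_I[of w H J y] w(1) False zy(2) assms(2) ne by blast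
        then have "(w,y) \<in> adj_rel ?R" using w(1) False zy(2) by (simp add: adj_induce)
        then have "reachable ?R w y" using w(1) False zy(2) by (auto simp: reachable_def)
        then have "reachable ?R x y" by (rule reach_trans[OF w(2)])
        moreover have "y \<in> I - J" using False zy(2) by blast
        ultimately show ?thesis by auto
      qed
    qed
  qed
  then show ?thesis using assms(5) by auto
qed

lemma R1_comp:
  assumes "J \<subseteq> I" "I \<subseteq> verts H" "x \<in> I - J"
  shows "component_of (induce (reconn H J) (I - J)) x = component_of (induce H I) x - J"
proof
  show "component_of (induce (reconn H J) (I - J)) x \<subseteq> component_of (induce H I) x - J"
  proof
    fix y assume "y \<in> component_of (induce (reconn H J) (I - J)) x"
    then have r: "reachable (induce (reconn H J) (I - J)) x y" by (simp add: component_of_def)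
    then have "y \<in> I - J" by (simp add: reachable_def)
    then show "y \<in> component_of (induce H I) x - J" using R1_to[OF assms(1,3) r] by (simp add: component_of_def)
  qed
  show "component_of (induce H I) x - J \<subseteq> component_of (induce (reconn H J) (I - J)) x"
  proof
    fix y assume "y \<in> component_of (induce H I) x - J"
    then have "reachable (induce H I) x y" "y \<notin> J" by (auto simp: component_of_def)
    then show "y \<in> component_of (induce (reconn H J) (I - J)) x"
      using R1_from[OF assms] by (simp add: component_of_def)
  qed
qed

lemma comp_inter_even:
  assumes "finite J" "ecp H J" "J \<subseteq> I" "C \<in> components (induce H I)"
  shows "even (card (C \<inter> J))"
proof -
  note cf = comp_facts[OF assms(4)]
  have "sep H (C \<inter> J) (J - (C \<inter> J))" by (rule sep_mono[OF cf(3)]) (use assms(3) in blast)+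
  then show ?thesis using even_part(1)[OF assms(1,2)] by blast
qed

lemma card_split: "finite C \<Longrightarrow> card C = card (C - J) + card (C \<inter> J)"
  by (metis Int_Diff_Un Int_Diff_disjoint Un_commute card_Un_disjoint finite_Diff finite_Int inf_commute)

lemma G4:
  assumes "finite I" "J \<subseteq> I" "I \<subseteq> verts H" "ecp H J"
  shows "ecp H I \<longleftrightarrow> ecp (reconn H J) (I - J)"
proof -
  have fJ: "finite J" using assms(1,2) finite_subset by blast
  have fC: "finite C" if "C \<in> components (induce H I)" for C
    using comps_subset[OF that] assms(1) finite_subset by blast
  show ?thesis
  proof
    assume e: "ecp H I"
    show "ecp (reconn H J) (I - J)" unfolding ecp_def
    proof
      fix C' assume "C' \<in> components (induce (reconn H J) (I - J))"
      then obtain x where x: "x \<in> I - J" "C' = component_of (induce (reconn H J) (I - J)) x"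
        by (auto simp: components_def)
      let ?C = "component_of (induce H I) x"
      have C: "?C \<in> components (induce H I)" using x(1) by (simp add: components_def)
      have C': "C' = ?C - J" using R1_comp[OF assms(2,3) x(1)] x(2) by simp
      have "even (card ?C)" using e C unfolding ecp_def by blast
      moreover have "even (card (?C \<inter> J))" by (rule comp_inter_even[OF fJ assms(4,2) C])
      moreover have "card ?C = card (?C - J) + card (?C \<inter> J)" using card_split[OF fC[OF C]] .
      ultimately show "even (card C')" using C' by simp
    qed
  next
    assume e: "ecp (reconn H J) (I - J)"
    show "ecp H I" unfolding ecp_def
    proof
      fix C assume C: "C \<in> components (induce H I)"
      have ev: "even (card (C \<inter> J))" by (rule comp_inter_even[OF fJ assms(4,2) C])
      have sp: "card C = card (C - J) + card (C \<inter> J)" using card_split[OF fC[OF C]] .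
      show "even (card C)"
      proof (cases "C - J = {}")
        case True
        then have "card (C - J) = 0" by (simp only: card.empty)
        then show ?thesis using ev sp by simp
      next
        case False
        then obtain y where y: "y \<in> C" "y \<notin> J" by blast
        obtain x where x: "x \<in> I" "C = component_of (induce H I) x" using C by (auto simp: components_def)
        have Cy: "C = component_of (induce H I) y" using comp_eq[of y "induce H I" x] y x by simp
        have yI: "y \<in> I - J" using y comps_subset[OF C] by blast
        have "C - J = component_of (induce (reconn H J) (I - J)) y" using R1_comp[OF assms(2,3) yI] Cy by simp
        then have "C - J \<in> components (induce (reconn H J) (I - J))" using yI by (simp add: components_def)
        then have "even (card (C - J))" using e unfolding ecp_def by blast
        then show ?thesis using ev sp by simp
      qed
    qed
  qed
qed



definition Dset :: "'a graph \<Rightarrow> 'a set \<Rightarrow> 'a set set" where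
  "Dset G e = {J. J \<subseteq> verts G \<and> ecp (add_edge G e) J \<and> \<not> ecp G J}"

definition tt :: "'a graph \<Rightarrow> 'a set \<Rightarrow> 'a set \<Rightarrow> int" where
  "tt G e I = SA G I - (\<Sum>J\<in>{J\<in>Dset G e. J \<subseteq> I}. BB G J * SA (reconn (add_edge G e) J) (I - J))"

lemma finite_Dsub: "finite I \<Longrightarrow> finite {J\<in>Dset G e. J \<subseteq> I}"
  by (rule finite_subset[of _ "Pow I"]) auto

lemma ecp_empty: "ecp X {}"
  by (simp add: ecp_def components_def)

lemma shift_sum:
  assumes "finite I" "J \<subseteq> I"
  shows "(\<Sum>K\<in>{K\<in>Pow I. J \<subseteq> K}. f (K - J)) = (\<Sum>L\<in>Pow (I - J). f L)"
proof (rule sum.reindex_bij_witness[where i = "\<lambda>L. L \<union> J" and j = "\<lambda>K. K - J"])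
  fix K assume "K \<in> {K\<in>Pow I. J \<subseteq> K}"
  then show "K - J \<union> J = K" "K - J \<in> Pow (I - J)" by auto
next
  fix L assume "L \<in> Pow (I - J)"
  then show "L \<union> J - J = L" "L \<union> J \<in> {K\<in>Pow I. J \<subseteq> K}" using assms(2) by auto
qed simp

lemma sum_tt:
  assumes "finite I"
  shows "(\<Sum>K\<in>Pow I. tt G e K) =
     BB G I - (\<Sum>J\<in>{J\<in>Dset G e. J \<subseteq> I}. BB G J * BB (reconn (add_edge G e) J) (I - J))"
proof -
  let ?R = "\<lambda>J. reconn (add_edge G e) J"
  let ?B = "{J\<in>Dset G e. J \<subseteq> I}"
  have fP: "finite (Pow I)" using assms by simp
  have fB: "finite ?B" using finite_Dsub[OF assms] .
  have "(\<Sum>K\<in>Pow I. \<Sum>J\<in>{J\<in>Dset G e. J \<subseteq> K}. BB G J * SA (?R J) (K - J))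
      = (\<Sum>K\<in>Pow I. \<Sum>J\<in>{J\<in>?B. J \<subseteq> K}. BB G J * SA (?R J) (K - J))"
  proof (rule sum.cong[OF refl])
    fix K assume "K \<in> Pow I"
    then have "{J\<in>Dset G e. J \<subseteq> K} = {J\<in>?B. J \<subseteq> K}" by auto
    then show "(\<Sum>J\<in>{J\<in>Dset G e. J \<subseteq> K}. BB G J * SA (?R J) (K - J)) = (\<Sum>J\<in>{J\<in>?B. J \<subseteq> K}. BB G J * SA (?R J) (K - J))"
      by simp
  qed
  also have "\<dots> = (\<Sum>J\<in>?B. \<Sum>K\<in>{K\<in>Pow I. J \<subseteq> K}. BB G J * SA (?R J) (K - J))"
    by (rule sum.swap_restrict[OF fP fB])
  also have "\<dots> = (\<Sum>J\<in>?B. BB G J * BB (?R J) (I - J))"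
  proof (rule sum.cong[OF refl])
    fix J assume "J \<in> ?B"
    then have JI: "J \<subseteq> I" by simp
    have "(\<Sum>K\<in>{K\<in>Pow I. J \<subseteq> K}. BB G J * SA (?R J) (K - J)) = BB G J * (\<Sum>K\<in>{K\<in>Pow I. J \<subseteq> K}. SA (?R J) (K - J))"
      by (simp add: sum_distrib_left)
    also have "\<dots> = BB G J * BB (?R J) (I - J)"
      unfolding BB_def using shift_sum[OF assms JI, of "SA (?R J)"] by simp
    finally show "(\<Sum>K\<in>{K\<in>Pow I. J \<subseteq> K}. BB G J * SA (?R J) (K - J)) = BB G J * BB (?R J) (I - J)" .
  qed
  finally have X: "(\<Sum>K\<in>Pow I. \<Sum>J\<in>{J\<in>Dset G e. J \<subseteq> K}. BB G J * SA (?R J) (K - J)) = (\<Sum>J\<in>?B. BB G J * BB (?R J) (I - J))" .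
  show ?thesis unfolding tt_def sum_subtractf X by (simp add: BB_def)
qed

lemma pow_split: "Pow I = insert I {K. K \<subset> I}" by auto

lemma sum_pow_split:
  assumes "finite I"
  shows "(\<Sum>K\<in>Pow I. f K) = f I + (\<Sum>K\<in>{K. K \<subset> I}. f K)"
proof -
  have f: "finite {K. K \<subset> I}" by (rule finite_subset[of _ "Pow I"]) (auto simp: assms)
  show ?thesis unfolding pow_split using f by (subst sum.insert) auto
qed

lemma signed_identity:
  assumes fin: "finite (verts G)"
  shows "I \<subseteq> verts G \<Longrightarrow> SA (add_edge G e) I = tt G e I"
proof (induction "card I" arbitrary: I rule: less_induct)
  case less
  let ?H = "add_edge G e"
  let ?R = "\<lambda>J. reconn ?H J"
  have fI: "finite I" using less.prems fin finite_subset by blast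
  show ?case
  proof (cases "ecp ?H I")
    case False
    have "SA ?H I = 0" using G1'[OF fI False] .
    moreover have "SA G I = 0" using G1'[OF fI] ecp_mono_add[OF fI] False by blast
    moreover have "(\<Sum>J\<in>{J\<in>Dset G e. J \<subseteq> I}. BB G J * SA (?R J) (I - J)) = 0"
    proof (rule sum.neutral, rule ballI)
      fix J assume J: "J \<in> {J\<in>Dset G e. J \<subseteq> I}"
      then have "ecp ?H J" "J \<subseteq> I" by (auto simp: Dset_def)
      then have "\<not> ecp (?R J) (I - J)" using G4[OF fI _ _ ] less.prems False by simp
      then have "SA (?R J) (I - J) = 0" using G1' fI by blast
      then show "BB G J * SA (?R J) (I - J) = 0" by simp
    qed
    ultimately show ?thesis by (simp add: tt_def)
  next
    case True
    note ecpI = True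
    show ?thesis
    proof (cases "I = {}")
      case True
      have "{J\<in>Dset G e. J \<subseteq> I} = {}" using True ecp_empty[of G] by (auto simp: Dset_def)
      then show ?thesis using True by (simp add: tt_def)
    next
      case False
      have IH: "SA ?H K = tt G e K" if "K \<subset> I" for K
        using less.hyps[of K] that less.prems psubset_card_mono[OF fI that] by blast
      have "BB ?H I = 0" using L2[OF fI False ecpI] .
      then have "SA ?H I + (\<Sum>K\<in>{K. K \<subset> I}. SA ?H K) = 0"
        unfolding BB_def sum_pow_split[OF fI] .
      then have A: "SA ?H I = - (\<Sum>K\<in>{K. K \<subset> I}. tt G e K)" using IH by simp
      have Z: "(\<Sum>J\<in>{J\<in>Dset G e. J \<subseteq> I}. BB G J * BB (?R J) (I - J)) = BB G I"
      proof -
        have "(\<Sum>J\<in>{J\<in>Dset G e. J \<subseteq> I}. BB G J * BB (?R J) (I - J))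
            = (\<Sum>J\<in>{J\<in>Dset G e. J \<subseteq> I}. if J = I then BB G I else 0)"
        proof (rule sum.cong[OF refl])
          fix J assume J: "J \<in> {J\<in>Dset G e. J \<subseteq> I}"
          show "BB G J * BB (?R J) (I - J) = (if J = I then BB G I else 0)"
          proof (cases "J = I")
            case True then show ?thesis by simp
          next
            case ne: False
            have "ecp ?H J" "J \<subseteq> I" using J by (auto simp: Dset_def)
            then have "ecp (?R J) (I - J)" using G4[OF fI _ _ ] less.prems ecpI by simp
            moreover have "I - J \<noteq> {}" using ne \<open>J \<subseteq> I\<close> by blast
            ultimately have "BB (?R J) (I - J) = 0" using L2 fI by blast
            then show ?thesis using ne by simp
          qed
        qed
        also have "\<dots> = (if I \<in> {J\<in>Dset G e. J \<subseteq> I} then BB G I else 0)"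
          using sum.delta[OF finite_Dsub[OF fI], of I "\<lambda>_. BB G I"] by simp
        also have "\<dots> = BB G I"
        proof (cases "I \<in> Dset G e")
          case True then show ?thesis by simp
        next
          case False
          then have "ecp G I" using ecpI less.prems by (auto simp: Dset_def)
          then show ?thesis using False L2[OF fI \<open>I \<noteq> {}\<close>] by simp
        qed
        finally show ?thesis .
      qed
      have "(\<Sum>K\<in>Pow I. tt G e K) = 0" using sum_tt[OF fI, of G e] Z by simp
      then have "tt G e I = - (\<Sum>K\<in>{K. K \<subset> I}. tt G e K)"
        unfolding sum_pow_split[OF fI] by simp
      then show ?thesis using A by simp
    qed
  qed
qed

lemma BB_identity:
  assumes "finite (verts G)" "I \<subseteq> verts G"
  shows "BB (add_edge G e) I = BB G I - (\<Sum>J\<in>{J\<in>Dset G e. J \<subseteq> I}. BB G J * BB (reconn (add_edge G e) J) (I - J))"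
proof -
  have fI: "finite I" using assms finite_subset by blast
  have "BB (add_edge G e) I = (\<Sum>K\<in>Pow I. tt G e K)"
    unfolding BB_def using signed_identity[OF assms(1)] assms(2) by (intro sum.cong) auto
  then show ?thesis using sum_tt[OF fI] by simp
qed



definition sg :: "nat \<Rightarrow> int" where "sg n = (-1) ^ (n div 2)"

lemma sg_sq: "sg n * sg n = 1"
  by (simp add: sg_def power_mult_distrib[symmetric])

lemma sg_abs: "\<bar>sg n\<bar> = 1" by (simp add: sg_def power_abs)

lemma sg_add_even: "even a \<Longrightarrow> sg (a + b) = sg a * sg b"
proof -
  assume "even a"
  then have "(a + b) div 2 = a div 2 + b div 2" by auto
  then show ?thesis by (simp add: sg_def power_add)
qed

lemma sg_add_odd: "odd a \<Longrightarrow> odd b \<Longrightarrow> sg (a + b) = - (sg a * sg b)"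
proof -
  assume "odd a" "odd b"
  then have "(a + b) div 2 = a div 2 + b div 2 + 1"
    by (auto elim!: oddE)
  then show ?thesis by (simp add: sg_def power_add)
qed

definition twosets :: "'a graph \<Rightarrow> bool" where
  "twosets X \<longleftrightarrow> (\<forall>e\<in>edges X. \<exists>x y. x \<noteq> y \<and> e = {x, y})"

lemma sep_add:
  assumes "sep G A B" "A \<inter> B = {}" "e \<subseteq> A \<or> e \<inter> A = {}"
  shows "sep (add_edge G e) A B"
  unfolding sep_def
proof (intro ballI notI)
  fix x y assume x: "x \<in> A" and y: "y \<in> B" and xy: "{x,y} \<in> edges (add_edge G e)"
  show False
  proof (cases "{x,y} = e")
    case True then show False using assms(2,3) x y by blast
  next
    case False then have "{x,y} \<in> edges G" using xy by simp
    then show False using assms(1) x y unfolding sep_def by blast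
  qed
qed

lemma induce_add_edge_notin: "\<not> e \<subseteq> J \<Longrightarrow> induce (add_edge G e) J = induce G J"
  by (auto simp: induce_def add_edge_def edges_def)

lemma ecp_add_notin: "\<not> e \<subseteq> J \<Longrightarrow> ecp (add_edge G e) J = ecp G J"
  by (simp add: ecp_def induce_add_edge_notin)

lemma SignD:
  assumes fJ: "finite J" and eH: "ecp (add_edge G e) J" and nG: "\<not> ecp G J" and e: "e = {u,v}"
    and hb: "\<And>C. C \<subset> J \<Longrightarrow> connected_graph (induce G C) \<Longrightarrow> odd (card C) \<Longrightarrow> 0 \<le> sg (card C) * BB G C"
  shows "sg (card J) * BB G J \<le> 0"
proof -
  let ?H = "add_edge G e"
  have eJ: "e \<subseteq> J"
  proof (rule ccontr)
    assume "\<not> e \<subseteq> J"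
    then have "ecp ?H J = ecp G J" by (rule ecp_add_notin)
    then show False using eH nG by simp
  qed
  then have uv: "u \<in> J" "v \<in> J" using e by auto
  let ?Cu = "component_of (induce G J) u"
  let ?Cv = "component_of (induce G J) v"
  have Cu: "?Cu \<in> components (induce G J)" using uv by (simp add: components_def)
  have Cv: "?Cv \<in> components (induce G J)" using uv by (simp add: components_def)
  note fu = comp_facts[OF Cu] and fv = comp_facts[OF Cv]
  have uCu: "u \<in> ?Cu" using comp_self[of u "induce G J"] uv by simp
  have vCv: "v \<in> ?Cv" using comp_self[of v "induce G J"] uv by simp
  have evenC: "even (card C)" if C: "C \<in> components (induce G J)" and ec: "e \<subseteq> C \<or> e \<inter> C = {}" for C
  proof -
    note cf = comp_facts[OF C]
    have "sep ?H C (J - C)" by (rule sep_add[OF cf(3) _ ec]) blast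
    then show ?thesis using even_part(1)[OF fJ eH cf(1)] by blast
  qed
  have compC: "C = ?Cu" if C: "C \<in> components (induce G J)" and "u \<in> C" for C
  proof -
    obtain x where x: "C = component_of (induce G J) x" using C by (auto simp: components_def)
    show ?thesis using comp_eq[of u "induce G J" x] that x by simp
  qed
  have compC': "C = ?Cv" if C: "C \<in> components (induce G J)" and "v \<in> C" for C
  proof -
    obtain x where x: "C = component_of (induce G J) x" using C by (auto simp: components_def)
    show ?thesis using comp_eq[of v "induce G J" x] that x by simp
  qed
  have vnCu: "v \<notin> ?Cu"
  proof
    assume vCu: "v \<in> ?Cu"
    have "ecp G J" unfolding ecp_def
    proof
      fix C assume C: "C \<in> components (induce G J)"
      have "e \<subseteq> C \<or> e \<inter> C = {}"
      proof (cases "u \<in> C \<or> v \<in> C")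
        case True
        have "C = ?Cu"
        proof (cases "u \<in> C")
          case True then show ?thesis using compC C by blast
        next
          case False
          then have "v \<in> C" using \<open>u \<in> C \<or> v \<in> C\<close> by blast
          then have "C = ?Cv" using compC' C by blast
          also have "?Cv = ?Cu" using comp_eq[OF vCu] .
          finally show ?thesis .
        qed
        then show ?thesis using uCu vCu e by auto
      next
        case False then show ?thesis using e by auto
      qed
      then show "even (card C)" using evenC C by blast
    qed
    then show False using nG by simp
  qed
  have disj: "?Cu \<inter> ?Cv = {}"
  proof (rule ccontr)
    assume "?Cu \<inter> ?Cv \<noteq> {}"
    then have "?Cu = ?Cv" by (rule comp_disj)
    then show False using vnCu vCv by simp
  qed
  let ?W = "?Cu \<union> ?Cv"
  have WJ: "?W \<subseteq> J" using fu(1) fv(1) by blast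
  have fCu: "finite ?Cu" using fu(1) fJ finite_subset by blast
  have fCv: "finite ?Cv" using fv(1) fJ finite_subset by blast
  have fW: "finite ?W" using fCu fCv by simp
  have sepW: "sep G ?W (J - ?W)" unfolding sep_def
  proof (intro ballI)
    fix x y assume x: "x \<in> ?W" and y: "y \<in> J - ?W"
    show "{x, y} \<notin> edges G"
    proof (cases "x \<in> ?Cu")
      case True then show ?thesis using fu(3) y unfolding sep_def by blast
    next
      case False then have "x \<in> ?Cv" using x by blast
      then show ?thesis using fv(3) y unfolding sep_def by blast
    qed
  qed
  have sepWH: "sep ?H ?W (J - ?W)" by (rule sep_add[OF sepW]) (use uCu vCv e in auto)
  have evW: "even (card ?W)" using even_part(1)[OF fJ eH WJ sepWH] .
  have cardW: "card ?W = card ?Cu + card ?Cv" using card_Un_disjoint[OF fCu fCv disj] .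
  have odds: "odd (card ?Cu) \<and> odd (card ?Cv)"
  proof -
    obtain C where C: "C \<in> components (induce G J)" "odd (card C)" using nG unfolding ecp_def by blast
    then have "\<not> (e \<subseteq> C \<or> e \<inter> C = {})" using evenC by blast
    then have "u \<in> C \<or> v \<in> C" using e by auto
    then have "C = ?Cu \<or> C = ?Cv" using compC[OF C(1)] compC'[OF C(1)] by blast
    then have "odd (card ?Cu) \<or> odd (card ?Cv)" using C(2) by auto
    then show ?thesis using evW cardW by auto
  qed
  have sepuv: "sep G ?Cu ?Cv" by (rule sep_mono[OF fu(3)]) (use disj fv(1) in blast)+
  have B2: "BB G ?W = BB G ?Cu * BB G ?Cv" by (rule BB_mult[OF fCu fCv sepuv disj])
  have "BB G (?W \<union> (J - ?W)) = BB G ?W * BB G (J - ?W)"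
    by (rule BB_mult[OF fW _ sepW]) (use fJ in auto)
  then have B1: "BB G J = BB G ?W * BB G (J - ?W)" using WJ by (simp add: Un_absorb1)
  show ?thesis
  proof (cases "J - ?W = {}")
    case False
    have JJ: "J - (J - ?W) = ?W" using WJ by blast
    have "sep ?H (J - ?W) (J - (J - ?W))" unfolding JJ by (rule sep_sym[OF sepWH])
    then have e1: "ecp ?H (J - ?W)" by (rule even_part(2)[OF fJ eH Diff_subset])
    have e2: "\<not> e \<subseteq> J - ?W" using uCu e by auto
    have "ecp G (J - ?W)" using ecp_add_notin[OF e2] e1 by simp
    then have "BB G (J - ?W) = 0" by (rule L2[OF _ False, rotated]) (use fJ in simp)
    then show ?thesis using B1 by simp
  next
    case True
    then have JW: "J = ?W" using WJ by blast
    have ne_u: "?Cu \<noteq> {}" and ne_v: "?Cv \<noteq> {}" using fu(2) fv(2) .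
    have "?Cu \<subset> J" using fu(1) vnCu uv(2) by blast
    then have hu: "0 \<le> sg (card ?Cu) * BB G ?Cu" by (rule hb[OF _ fu(4)]) (use odds in simp)
    have "?Cv \<subset> J" using fv(1) disj uCu uv(1) by blast
    then have hv: "0 \<le> sg (card ?Cv) * BB G ?Cv" by (rule hb[OF _ fv(4)]) (use odds in simp)
    have sgJ: "sg (card J) = - (sg (card ?Cu) * sg (card ?Cv))"
    proof -
      have "card J = card ?Cu + card ?Cv" using JW cardW by simp
      then show ?thesis using sg_add_odd[of "card ?Cu" "card ?Cv"] odds by simp
    qed
    have BJ: "BB G J = BB G ?Cu * BB G ?Cv" using B2 JW by simp
    have "sg (card J) * BB G J = - ((sg (card ?Cu) * BB G ?Cu) * (sg (card ?Cv) * BB G ?Cv))"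
      unfolding sgJ BJ by (simp add: algebra_simps)
    also have "\<dots> \<le> 0" using mult_nonneg_nonneg[OF hu hv] by simp
    finally show ?thesis .
  qed
qed



lemma bridge:
  assumes fI: "finite I" and e: "e = {u,v}" and uI: "u \<in> I" and vI: "v \<in> I"
    and con: "connected_graph (induce (add_edge G e) I)" and ncon: "\<not> connected_graph (induce G I)"
    and odd: "odd (card I)"
  shows "BB G I = 0"
proof -
  let ?Cu = "component_of (induce G I) u"
  let ?Cv = "component_of (induce G I) v"
  have Cu: "?Cu \<in> components (induce G I)" using uI by (simp add: components_def)
  have Cv: "?Cv \<in> components (induce G I)" using vI by (simp add: components_def)
  note fu = comp_facts[OF Cu] and fv = comp_facts[OF Cv]
  have uCu: "u \<in> ?Cu" using comp_self[of u "induce G I"] uI by simp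
  have vCv: "v \<in> ?Cv" using comp_self[of v "induce G I"] vI by simp
  have cover: "y \<in> ?Cu \<union> ?Cv" if "(u,y) \<in> (adj_rel (induce (add_edge G e) I))\<^sup>*" for y
    using that
  proof (induction rule: rtrancl_induct)
    case base then show ?case using uCu by blast
  next
    case (step y z)
    have yz: "y \<in> I" "z \<in> I" "{y,z} \<in> insert e (edges G)" using step.hyps(2) by (auto simp: adj_induce)
    show ?case
    proof (cases "{y,z} = e")
      case True
      then have "z = u \<or> z = v" using e by (metis doubleton_eq_iff insertI1 insert_commute)
      then show ?thesis using uCu vCv by blast
    next
      case False
      then have "(y,z) \<in> adj_rel (induce G I)" using yz by (simp add: adj_induce)
      then have r: "reachable (induce G I) y z" using yz by (auto simp: reachable_def)
      show ?thesis
      proof (cases "y \<in> ?Cu")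
        case True
        then have "reachable (induce G I) u y" by (simp add: component_of_def)
        then have "reachable (induce G I) u z" using r by (rule reach_trans)
        then show ?thesis by (simp add: component_of_def)
      next
        case False
        then have "y \<in> ?Cv" using step.IH by blast
        then have "reachable (induce G I) v y" by (simp add: component_of_def)
        then have "reachable (induce G I) v z" using r by (rule reach_trans)
        then show ?thesis by (simp add: component_of_def)
      qed
    qed
  qed
  have IU: "I = ?Cu \<union> ?Cv"
  proof
    show "?Cu \<union> ?Cv \<subseteq> I" using fu(1) fv(1) by blast
    show "I \<subseteq> ?Cu \<union> ?Cv"
    proof
      fix y assume "y \<in> I"
      then have "reachable (induce (add_edge G e) I) u y" using con uI unfolding connected_graph_def by simp
      then show "y \<in> ?Cu \<union> ?Cv" using cover by (simp add: reachable_def)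
    qed
  qed
  have vnCu: "v \<notin> ?Cu"
  proof
    assume "v \<in> ?Cu"
    then have "?Cv = ?Cu" by (rule comp_eq)
    then have "component_of (induce G I) u = verts (induce G I)" using IU by simp
    then show False using comp_full_connected[of u "induce G I"] uI ncon by simp
  qed
  have disj: "?Cu \<inter> ?Cv = {}"
  proof (rule ccontr)
    assume "?Cu \<inter> ?Cv \<noteq> {}"
    then have "?Cu = ?Cv" by (rule comp_disj)
    then show False using vnCu vCv by simp
  qed
  have fCu: "finite ?Cu" using fu(1) fI finite_subset by blast
  have fCv: "finite ?Cv" using fv(1) fI finite_subset by blast
  have sepuv: "sep G ?Cu ?Cv" by (rule sep_mono[OF fu(3)]) (use disj fv(1) in blast)+
  have "BB G (?Cu \<union> ?Cv) = BB G ?Cu * BB G ?Cv" by (rule BB_mult[OF fCu fCv sepuv disj])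
  then have B: "BB G I = BB G ?Cu * BB G ?Cv" using IU by simp
  have "card I = card ?Cu + card ?Cv" using IU card_Un_disjoint[OF fCu fCv disj] by simp
  then have "even (card ?Cu) \<or> even (card ?Cv)" using odd by auto
  then show ?thesis
  proof
    assume "even (card ?Cu)"
    then have "BB G ?Cu = 0" by (rule L2a[OF fCu fu(2) fu(4)])
    then show ?thesis using B by simp
  next
    assume "even (card ?Cv)"
    then have "BB G ?Cv = 0" by (rule L2a[OF fCv fv(2) fv(4)])
    then show ?thesis using B by simp
  qed
qed



definition good :: "'a graph \<Rightarrow> 'a set \<Rightarrow> bool" where
  "good X I \<longleftrightarrow> 0 \<le> sg (card I) * SA X I \<and>
     (connected_graph (induce X I) \<and> odd (card I) \<longrightarrow> 0 \<le> sg (card I) * BB X I)"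

lemma twosets_reconn: "twosets (reconn H J)"
  unfolding twosets_def edges_reconn by blast

lemma SA_induce_self: "K \<subseteq> I \<Longrightarrow> SA (induce X I) K = SA X K"
  by (simp add: SA_def)

lemma BB_induce_self: "BB (induce X I) I = BB X I"
  unfolding BB_def by (intro sum.cong) (auto simp: SA_induce_self)

lemma card_diff_split: "finite I \<Longrightarrow> J \<subseteq> I \<Longrightarrow> card I = card J + card (I - J)"
  by (metis card_Diff_subset card_mono finite_subset le_add_diff_inverse)

lemma sign_step:
  fixes X :: "'a graph"
  assumes fI: "finite I" and tw: "twosets X"
    and outer: "\<And>(X' :: 'a graph) I'. finite I' \<Longrightarrow> card I' < card I \<Longrightarrow> twosets X' \<Longrightarrow> good X' I'"
    and inner: "\<And>X' :: 'a graph. twosets X' \<Longrightarrow> card {e\<in>edges X'. e \<subseteq> I} < card {e\<in>edges X. e \<subseteq> I} \<Longrightarrow> good X' I"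
  shows "good X I"
proof (cases "\<exists>e\<in>edges X. e \<subseteq> I")
  case False
  have noadj: "adj_rel (induce X I) = {}" using False by (auto simp: adj_induce)
  have reach_eq: "x = y" if "reachable (induce X I) x y" for x y
    using that noadj by (simp add: reachable_def)
  have comp1: "component_of (induce X I) x = {x}" if "x \<in> I" for x
    using reach_eq that reach_refl[of x "induce X I"] unfolding component_of_def by auto
  have SA0: "SA X I = 0" if ne: "I \<noteq> {}"
  proof -
    obtain x where x: "x \<in> I" using ne by blast
    have "{x} \<in> components (induce X I)" using comp1[OF x] x unfolding components_def by force
    then show ?thesis using G1[OF fI] by fastforce
  qed
  have a: "0 \<le> sg (card I) * SA X I"
    using SA0 by (cases "I = {}") (auto simp: sg_def)
  have b: "0 \<le> sg (card I) * BB X I" if c: "connected_graph (induce X I)" and o: "odd (card I)"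
  proof -
    obtain x where x: "x \<in> I" using c unfolding connected_graph_def by auto
    have "I = {x}"
      using c x reach_eq unfolding connected_graph_def by auto
    then have "BB X I = SA X {} + SA X {x}" by (simp add: BB_def Pow_insert)
    also have "\<dots> = 1" using SA0 \<open>I = {x}\<close> by simp
    finally show ?thesis using \<open>I = {x}\<close> by (simp add: sg_def)
  qed
  show ?thesis using a b by (simp add: good_def)
next
  case True
  then obtain e where eX: "e \<in> edges X" and eI: "e \<subseteq> I" by blast
  then obtain u v where uv: "u \<noteq> v" "e = {u,v}" using tw unfolding twosets_def by blast
  have uI: "u \<in> I" and vI: "v \<in> I" using eI uv by auto
  define G' where "G' = (I, {e'\<in>edges X. e' \<subseteq> I} - {e})"
  let ?H = "add_edge G' e"
  have vG: "verts G' = I" by (simp add: G'_def verts_def)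
  have eG: "edges G' = {e'\<in>edges X. e' \<subseteq> I} - {e}" by (simp add: G'_def edges_def)
  have HX: "?H = induce X I" using eX eI by (auto simp: add_edge_def G'_def verts_def edges_def induce_def)
  have twG: "twosets G'" using tw unfolding twosets_def eG by blast
  have fE: "finite {e\<in>edges X. e \<subseteq> I}" by (rule finite_subset[of _ "Pow I"]) (auto simp: fI)
  have "{e'\<in>edges G'. e' \<subseteq> I} = {e'\<in>edges X. e' \<subseteq> I} - {e}" unfolding eG by blast
  moreover have "card ({e'\<in>edges X. e' \<subseteq> I} - {e}) < card {e\<in>edges X. e \<subseteq> I}"
    using eX eI fE by (intro card_Diff1_less) auto
  ultimately have "card {e'\<in>edges G'. e' \<subseteq> I} < card {e\<in>edges X. e \<subseteq> I}" by simp
  then have gG: "good G' I" using inner[OF twG] by blast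
  have SAX: "SA X I = SA ?H I" unfolding HX by (simp add: SA_induce_self)
  have BBX: "BB X I = BB ?H I" unfolding HX by (simp add: BB_induce_self)
  have conX: "connected_graph (induce ?H I) = connected_graph (induce X I)" unfolding HX by simp
  let ?D = "{J\<in>Dset G' e. J \<subseteq> I}"
  let ?R = "\<lambda>J. reconn ?H J"
  have Jfacts: "J \<subseteq> I \<and> J \<noteq> {} \<and> even (card J) \<and> finite J \<and> card (I - J) < card I \<and>
      sg (card I) = sg (card J) * sg (card (I - J)) \<and> sg (card J) * BB G' J \<le> 0" if J: "J \<in> ?D" for J
  proof -
    have JI: "J \<subseteq> I" and eH: "ecp ?H J" and nG: "\<not> ecp G' J" using J by (auto simp: Dset_def vG)
    have fJ: "finite J" using JI fI finite_subset by blast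
    have ne: "J \<noteq> {}" using nG ecp_empty[of G'] by blast
    have ev: "even (card J)" by (rule even_card_ecp[OF fJ eH])
    have cI: "card I = card J + card (I - J)" by (rule card_diff_split[OF fI JI])
    have lt: "card (I - J) < card I" using cI ne fJ by (simp add: card_gt_0_iff)
    have sgI: "sg (card I) = sg (card J) * sg (card (I - J))" using cI sg_add_even[OF ev] by simp
    have hb: "0 \<le> sg (card C) * BB G' C" if "C \<subset> J" "connected_graph (induce G' C)" "odd (card C)" for C
    proof -
      have "finite C" using that(1) fJ finite_subset by blast
      moreover have "card C < card I" using psubset_card_mono[OF fJ that(1)] card_mono[OF fI JI] by simp
      ultimately have "good G' C" using outer twG by blast
      then show ?thesis using that by (simp add: good_def)
    qed
    have "sg (card J) * BB G' J \<le> 0" by (rule SignD[OF fJ eH nG uv(2) hb])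
    then show ?thesis using JI ne ev fJ lt sgI by blast
  qed
  have a: "0 \<le> sg (card I) * SA X I"
  proof -
    have "SA X I = tt G' e I" unfolding SAX using signed_identity[of G' I e] vG fI by simp
    then have eq: "sg (card I) * SA X I = sg (card I) * SA G' I
        - (\<Sum>J\<in>?D. sg (card I) * (BB G' J * SA (?R J) (I - J)))"
      by (simp add: tt_def right_diff_distrib sum_distrib_left)
    have "(\<Sum>J\<in>?D. sg (card I) * (BB G' J * SA (?R J) (I - J))) \<le> 0"
    proof (rule sum_nonpos)
      fix J assume J: "J \<in> ?D"
      note jf = Jfacts[OF J]
      have "good (?R J) (I - J)" by (rule outer) (use jf fI twosets_reconn[of ?H J] in auto)
      then have r: "0 \<le> sg (card (I - J)) * SA (?R J) (I - J)" by (simp add: good_def)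
      have "sg (card I) * (BB G' J * SA (?R J) (I - J)) = (sg (card J) * BB G' J) * (sg (card (I - J)) * SA (?R J) (I - J))"
        using jf by (simp add: algebra_simps)
      also have "\<dots> \<le> 0" using jf r by (simp add: mult_nonpos_nonneg)
      finally show "sg (card I) * (BB G' J * SA (?R J) (I - J)) \<le> 0" .
    qed
    moreover have "0 \<le> sg (card I) * SA G' I" using gG by (simp add: good_def)
    ultimately show ?thesis using eq by linarith
  qed
  have b: "0 \<le> sg (card I) * BB X I" if c: "connected_graph (induce X I)" and o: "odd (card I)"
  proof -
    have "BB X I = BB G' I - (\<Sum>J\<in>?D. BB G' J * BB (?R J) (I - J))"
      unfolding BBX using BB_identity[of G' I e] vG fI by simp
    then have eq: "sg (card I) * BB X I = sg (card I) * BB G' I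
        - (\<Sum>J\<in>?D. sg (card I) * (BB G' J * BB (?R J) (I - J)))"
      by (simp add: right_diff_distrib sum_distrib_left)
    have "(\<Sum>J\<in>?D. sg (card I) * (BB G' J * BB (?R J) (I - J))) \<le> 0"
    proof (rule sum_nonpos)
      fix J assume J: "J \<in> ?D"
      note jf = Jfacts[OF J]
      have JI: "J \<subseteq> I" using jf by blast
      have cI: "card I = card J + card (I - J)" by (rule card_diff_split[OF fI JI])
      have oddIJ: "odd (card (I - J))" using cI o jf by auto
      then have neIJ: "I - J \<noteq> {}" by (metis card.empty odd_card_imp_not_empty)
      have conR: "connected_graph (induce (?R J) (I - J))"
        unfolding connected_graph_def
      proof (intro conjI ballI)
        show "verts (induce (?R J) (I - J)) \<noteq> {}" using neIJ by simp
        fix x y assume x: "x \<in> verts (induce (?R J) (I - J))" and y: "y \<in> verts (induce (?R J) (I - J))"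
        have "reachable (induce X I) x y" using c x y unfolding connected_graph_def by auto
        then have "reachable (induce ?H I) x y" unfolding HX by simp
        then show "reachable (induce (?R J) (I - J)) x y"
          using R1_from[of J I ?H x y] JI vG x y by simp
      qed
      have "good (?R J) (I - J)" by (rule outer) (use jf fI twosets_reconn[of ?H J] in auto)
      then have r: "0 \<le> sg (card (I - J)) * BB (?R J) (I - J)" using conR oddIJ by (simp add: good_def)
      have "sg (card I) * (BB G' J * BB (?R J) (I - J)) = (sg (card J) * BB G' J) * (sg (card (I - J)) * BB (?R J) (I - J))"
        using jf by (simp add: algebra_simps)
      also have "\<dots> \<le> 0" using jf r by (simp add: mult_nonpos_nonneg)
      finally show "sg (card I) * (BB G' J * BB (?R J) (I - J)) \<le> 0" .
    qed
    moreover have "0 \<le> sg (card I) * BB G' I"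
    proof (cases "connected_graph (induce G' I)")
      case True then show ?thesis using gG o by (simp add: good_def)
    next
      case False
      have "BB G' I = 0" by (rule bridge[OF fI uv(2) uI vI _ False o]) (use conX c in simp)
      then show ?thesis by simp
    qed
    ultimately show ?thesis using eq by linarith
  qed
  show ?thesis using a b by (simp add: good_def)
qed

lemma sign_main: "finite I \<Longrightarrow> twosets (X :: 'a graph) \<Longrightarrow> good X I"
proof (induction "card I" arbitrary: X I rule: less_induct)
  case less
  have outer: "good X' I'" if "finite I'" "card I' < card I" "twosets X'" for X' :: "'a graph" and I'
    using less.hyps[OF that(2,1,3)] .
  have "\<And>X. twosets X \<Longrightarrow> good X I"
  proof -
    fix X :: "'a graph"
    show "twosets X \<Longrightarrow> good X I"
    proof (induction "card {e\<in>edges X. e \<subseteq> I}" arbitrary: X rule: less_induct)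
      case less2: less
      show ?case
      proof (rule sign_step[OF \<open>finite I\<close> less2.prems outer])
        fix X' :: "'a graph" assume a: "twosets X'" "card {e\<in>edges X'. e \<subseteq> I} < card {e\<in>edges X. e \<subseteq> I}"
        show "good X' I" using less2.hyps[OF a(2) a(1)] .
      qed
    qed
  qed
  then show ?case using less.prems by blast
qed



lemma sg_abs_eq: "0 \<le> sg n * x \<Longrightarrow> sg n * x = \<bar>x\<bar>"
proof -
  assume a: "0 \<le> sg n * x"
  have "\<bar>sg n * x\<bar> = \<bar>x\<bar>" by (simp add: abs_mult sg_abs)
  then show ?thesis using a by simp
qed

lemma sg_abs_eq_neg: "sg n * x \<le> 0 \<Longrightarrow> - (sg n * x) = \<bar>x\<bar>"
proof -
  assume a: "sg n * x \<le> 0"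
  have "\<bar>sg n * x\<bar> = \<bar>x\<bar>" by (simp add: abs_mult sg_abs)
  then show ?thesis using a by simp
qed

lemma abs_identity:
  fixes G :: "'a graph"
  assumes fV: "finite (verts G)" and twG: "twosets G" and e: "e = {u,v}" and uv: "u \<noteq> v"
    and I: "I \<subseteq> verts G"
  shows "\<bar>SA (add_edge G e) I\<bar> = \<bar>SA G I\<bar> +
    (\<Sum>J\<in>{J\<in>Dset G e. J \<subseteq> I}. \<bar>BB G J\<bar> * \<bar>SA (reconn (add_edge G e) J) (I - J)\<bar>)"
proof -
  let ?H = "add_edge G e"
  let ?R = "\<lambda>J. reconn ?H J"
  let ?D = "{J\<in>Dset G e. J \<subseteq> I}"
  let ?s = "sg (card I)"
  have fI: "finite I" using I fV finite_subset by blast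
  have twH: "twosets ?H" using twG e uv unfolding twosets_def by auto
  have gH: "good ?H I" by (rule sign_main[OF fI twH])
  have gG: "good G I" by (rule sign_main[OF fI twG])
  have "SA ?H I = tt G e I" by (rule signed_identity[OF fV I])
  then have eq: "?s * SA ?H I = ?s * SA G I - (\<Sum>J\<in>?D. ?s * (BB G J * SA (?R J) (I - J)))"
    by (simp add: tt_def right_diff_distrib sum_distrib_left)
  have t: "- (?s * (BB G J * SA (?R J) (I - J))) = \<bar>BB G J\<bar> * \<bar>SA (?R J) (I - J)\<bar>" if J: "J \<in> ?D" for J
  proof -
    have JI: "J \<subseteq> I" and eH: "ecp ?H J" and nG: "\<not> ecp G J" using J by (auto simp: Dset_def)
    have fJ: "finite J" using JI fI finite_subset by blast
    have ev: "even (card J)" by (rule even_card_ecp[OF fJ eH])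
    have cI: "card I = card J + card (I - J)" by (rule card_diff_split[OF fI JI])
    have sgI: "?s = sg (card J) * sg (card (I - J))" using cI sg_add_even[OF ev] by simp
    have hb: "0 \<le> sg (card C) * BB G C" if "C \<subset> J" "connected_graph (induce G C)" "odd (card C)" for C
    proof -
      have "finite C" using that(1) fJ finite_subset by blast
      then have "good G C" using sign_main twG by blast
      then show ?thesis using that by (simp add: good_def)
    qed
    have b: "sg (card J) * BB G J \<le> 0" by (rule SignD[OF fJ eH nG e hb])
    have fR: "finite (I - J)" using fI by simp
    have "good (?R J) (I - J)" by (rule sign_main[OF fR twosets_reconn])
    then have r: "0 \<le> sg (card (I - J)) * SA (?R J) (I - J)" by (simp add: good_def)
    have "- (?s * (BB G J * SA (?R J) (I - J))) = (- (sg (card J) * BB G J)) * (sg (card (I - J)) * SA (?R J) (I - J))"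
      unfolding sgI by (simp add: algebra_simps)
    also have "\<dots> = \<bar>BB G J\<bar> * \<bar>SA (?R J) (I - J)\<bar>"
      using sg_abs_eq_neg[OF b] sg_abs_eq[OF r] by simp
    finally show ?thesis .
  qed
  have "0 \<le> ?s * SA ?H I" using gH by (simp add: good_def)
  then have "\<bar>SA ?H I\<bar> = ?s * SA ?H I" using sg_abs_eq by metis
  also have "\<dots> = ?s * SA G I + (\<Sum>J\<in>?D. - (?s * (BB G J * SA (?R J) (I - J))))"
    using eq by (simp add: sum_negf)
  also have "\<dots> = \<bar>SA G I\<bar> + (\<Sum>J\<in>?D. \<bar>BB G J\<bar> * \<bar>SA (?R J) (I - J)\<bar>)"
  proof -
    have "0 \<le> ?s * SA G I" using gG by (simp add: good_def)
    then have "?s * SA G I = \<bar>SA G I\<bar>" by (rule sg_abs_eq)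
    moreover have "(\<Sum>J\<in>?D. - (?s * (BB G J * SA (?R J) (I - J)))) = (\<Sum>J\<in>?D. \<bar>BB G J\<bar> * \<bar>SA (?R J) (I - J)\<bar>)"
      using t by (rule sum.cong[OF refl])
    ultimately show ?thesis by simp
  qed
  finally show ?thesis .
qed



lemma a_idx_SA: "a_idx X i = (\<Sum>I\<in>{I. I \<subseteq> verts X \<and> int (card I) = 2 * i}. \<bar>SA X I\<bar>)"
  by (simp add: a_idx_def a_num_def SA_def)

lemma b_num_BB: "b_num (induce G J) = BB G J"
  unfolding b_num_def BB_def SA_def Pow_def by (intro sum.cong) auto

lemma EC_ecp: "EC X = {I. I \<subseteq> verts X \<and> ecp X I}"
  by (simp add: EC_def ecp_def)

lemma inner_reindex:
  assumes fV: "finite V" and JV: "J \<subseteq> V" and ev: "even (card J)"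
  shows "(\<Sum>I\<in>{I\<in>{I. I \<subseteq> V \<and> int (card I) = 2 * int i}. J \<subseteq> I}. f (I - J)) =
         (\<Sum>L\<in>{L. L \<subseteq> V - J \<and> int (card L) = 2 * (int i - int (card J) div 2)}. f L)"
proof -
  obtain k where k: "card J = 2 * k" using ev by blast
  have kk: "int (card J) div 2 = int k" using k by simp
  have fJ: "finite J" using JV fV finite_subset by blast
  show ?thesis
  proof (rule sum.reindex_bij_witness[where i = "\<lambda>L. L \<union> J" and j = "\<lambda>I. I - J"])
    fix I assume I: "I \<in> {I\<in>{I. I \<subseteq> V \<and> int (card I) = 2 * int i}. J \<subseteq> I}"
    then have IV: "I \<subseteq> V" and cI: "int (card I) = 2 * int i" and JI: "J \<subseteq> I" by auto
    show "I - J \<union> J = I" using JI by blast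
    have fI: "finite I" using IV fV finite_subset by blast
    have "card I = card J + card (I - J)" by (rule card_diff_split[OF fI JI])
    then have "int (card (I - J)) = 2 * (int i - int (card J) div 2)" using cI k kk by simp
    then show "I - J \<in> {L. L \<subseteq> V - J \<and> int (card L) = 2 * (int i - int (card J) div 2)}" using IV by auto
  next
    fix L assume L: "L \<in> {L. L \<subseteq> V - J \<and> int (card L) = 2 * (int i - int (card J) div 2)}"
    then have LV: "L \<subseteq> V - J" and cL: "int (card L) = 2 * (int i - int (card J) div 2)" by auto
    show "L \<union> J - J = L" using LV by blast
    have fL: "finite L" using LV fV finite_subset by blast
    have "card (L \<union> J) = card L + card J" by (rule card_Un_disjoint[OF fL fJ]) (use LV in blast)
    then have "int (card (L \<union> J)) = 2 * int i" using cL k kk by simp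
    then show "L \<union> J \<in> {I\<in>{I. I \<subseteq> V \<and> int (card I) = 2 * int i}. J \<subseteq> I}" using LV JV by auto
  qed simp
qed

theorem mainTheorem8:
  fixes G :: "'a graph" and u v :: 'a and i :: nat
  assumes "simple_graph G"
    and "u \<in> verts G" and "v \<in> verts G" and "u \<noteq> v"
  shows "a_idx (add_edge G {u, v}) (int i) =
           a_idx G (int i) +
           (\<Sum>J\<in>EC (add_edge G {u, v}) - EC G.
              \<bar>b_num (induce G J)\<bar> *
              a_idx (reconn (add_edge G {u, v}) J) (int i - int (card J) div 2))"
proof -
  let ?e = "{u, v}"
  let ?H = "add_edge G ?e"
  let ?R = "\<lambda>J. reconn ?H J"
  let ?V = "verts G"
  let ?S = "{I. I \<subseteq> ?V \<and> int (card I) = 2 * int i}"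
  let ?D = "Dset G ?e"
  have fV: "finite ?V" using assms(1) by (simp add: simple_graph_def)
  have twG: "twosets G" using assms(1) unfolding simple_graph_def twosets_def by blast
  have fS: "finite ?S" by (rule finite_subset[of _ "Pow ?V"]) (auto simp: fV)
  have fD: "finite ?D" by (rule finite_subset[of _ "Pow ?V"]) (auto simp: fV Dset_def)
  have ECd: "EC ?H - EC G = ?D" by (auto simp: EC_ecp Dset_def)
  have "a_idx ?H (int i) = (\<Sum>I\<in>?S. \<bar>SA ?H I\<bar>)" by (simp add: a_idx_SA)
  also have "\<dots> = (\<Sum>I\<in>?S. \<bar>SA G I\<bar> + (\<Sum>J\<in>{J\<in>?D. J \<subseteq> I}. \<bar>BB G J\<bar> * \<bar>SA (?R J) (I - J)\<bar>))"
  proof (rule sum.cong[OF refl])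
    fix I assume "I \<in> ?S"
    then have "I \<subseteq> ?V" by simp
    then show "\<bar>SA ?H I\<bar> = \<bar>SA G I\<bar> + (\<Sum>J\<in>{J\<in>?D. J \<subseteq> I}. \<bar>BB G J\<bar> * \<bar>SA (?R J) (I - J)\<bar>)"
      by (rule abs_identity[OF fV twG refl assms(4)])
  qed
  also have "\<dots> = a_idx G (int i) + (\<Sum>I\<in>?S. \<Sum>J\<in>{J\<in>?D. J \<subseteq> I}. \<bar>BB G J\<bar> * \<bar>SA (?R J) (I - J)\<bar>)"
    by (simp add: sum.distrib a_idx_SA)
  also have "(\<Sum>I\<in>?S. \<Sum>J\<in>{J\<in>?D. J \<subseteq> I}. \<bar>BB G J\<bar> * \<bar>SA (?R J) (I - J)\<bar>)
      = (\<Sum>J\<in>?D. \<Sum>I\<in>{I\<in>?S. J \<subseteq> I}. \<bar>BB G J\<bar> * \<bar>SA (?R J) (I - J)\<bar>)"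
    by (rule sum.swap_restrict[OF fS fD])
  also have "\<dots> = (\<Sum>J\<in>?D. \<bar>BB G J\<bar> * a_idx (?R J) (int i - int (card J) div 2))"
  proof (rule sum.cong[OF refl])
    fix J assume J: "J \<in> ?D"
    then have JV: "J \<subseteq> ?V" and eH: "ecp ?H J" by (auto simp: Dset_def)
    have fJ: "finite J" using JV fV finite_subset by blast
    have ev: "even (card J)" by (rule even_card_ecp[OF fJ eH])
    have "(\<Sum>I\<in>{I\<in>?S. J \<subseteq> I}. \<bar>BB G J\<bar> * \<bar>SA (?R J) (I - J)\<bar>)
        = \<bar>BB G J\<bar> * (\<Sum>I\<in>{I\<in>?S. J \<subseteq> I}. \<bar>SA (?R J) (I - J)\<bar>)"
      by (simp add: sum_distrib_left)
    also have "(\<Sum>I\<in>{I\<in>?S. J \<subseteq> I}. \<bar>SA (?R J) (I - J)\<bar>)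
        = (\<Sum>L\<in>{L. L \<subseteq> ?V - J \<and> int (card L) = 2 * (int i - int (card J) div 2)}. \<bar>SA (?R J) L\<bar>)"
      by (rule inner_reindex[OF fV JV ev])
    also have "\<dots> = a_idx (?R J) (int i - int (card J) div 2)" by (simp add: a_idx_SA)
    finally show "(\<Sum>I\<in>{I\<in>?S. J \<subseteq> I}. \<bar>BB G J\<bar> * \<bar>SA (?R J) (I - J)\<bar>)
        = \<bar>BB G J\<bar> * a_idx (?R J) (int i - int (card J) div 2)" .
  qed
  finally show ?thesis unfolding ECd b_num_BB .
qed

end
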